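(* Consider the instance described in the context with any realization of $X_1,\dots,X_m$. For any allocation $\widehat{\mathcal{A}}$, if there exists a constant $K>0$ such that $$d_H\big(X_{[1:m/2]},\widehat X_{[1:m/2]}\big)>\frac m4-\frac{K\gamma\sqrt m}{2\epsilon}\quad\text{and}\quad\Big|\tfrac12\big(|\widehat A_\epsilon|-|\widehat B_\epsilon|\big)+V_\gamma\Big|\ge K\gamma\sqrt m,$$ then $\mathrm{Envy}(\widehat{\mathcal{A}})>0$.
   Context: Two agents $a,b$, $m$ items ($m$ a multiple of 4), additive utilities. Instance: binary $X_1,\dots,X_m$; for $i\le m/2$: if $X_i=1$ then $\mu^a_i=\frac12+\epsilon,\mu^b_i=\frac12-\epsilon$, if $X_i=0$ then $\mu^a_i=\frac12-\epsilon,\mu^b_i=\frac12+\epsilon$; for $i>m/2$: if $X_i=1$ then $\mu^a_i=\mu^b_i=\frac12+\gamma$, if $X_i=0$ then $\mu^a_i=\mu^b_i=\frac12-\gamma$; $\epsilon,\gamma\in(0,1/2]$. For an allocation $\widehat{\mathcal{A}}=(\widehat{\mathcal{A}}_a,\widehat{\mathcal{A}}_b)$ (partition of $[m]$): $\mathrm{Envy}_{a\to b}=\sum_{i\in\widehat{\mathcal{A}}_b}\mu^a_i-\sum_{i\in\widehat{\mathcal{A}}_a}\mu^a_i$, $\mathrm{Envy}_{b\to a}=\sum_{i\in\widehat{\mathcal{A}}_a}\mu^b_i-\sum_{i\in\widehat{\mathcal{A}}_b}\mu^b_i$, $\mathrm{Envy}=\max$ of the two. $\widehat X_i=1$ if $i\in\widehat{\mathcal{A}}_a$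 and $\widehat X_i=0$ otherwise; $\widehat A_\epsilon=\{i\le m/2:\widehat X_i=1\}$, $\widehat B_\epsilon=\{i\le m/2:\widehat X_i=0\}$; $S_i=1$ if $i\in\widehat{\mathcal{A}}_a$ and $S_i=-1$ otherwise; $V_\gamma=\sum_{i>m/2}S_i\mu^a_i$. $d_H$ is Hamming distance and $X_{[1:m/2]}=(X_1,\dots,X_{m/2})$. *)

theory Defs
  imports Complex_Main
begin

text \<open>Items are 1..m. X i = True encodes X_i = 1. An allocation is a pair of sets (Aa, Ab)
  partitioning {1..m}.\<close>

definition mu_a :: "nat \<Rightarrow> real \<Rightarrow> real \<Rightarrow> (nat \<Rightarrow> bool) \<Rightarrow> nat \<Rightarrow> real" where
  "mu_a m eps gam X i =
     (if i \<le> m div 2 then (if X i then 1/2 + eps else 1/2 - eps)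
      else (if X i then 1/2 + gam else 1/2 - gam))"

definition mu_b :: "nat \<Rightarrow> real \<Rightarrow> real \<Rightarrow> (nat \<Rightarrow> bool) \<Rightarrow> nat \<Rightarrow> real" where
  "mu_b m eps gam X i =
     (if i \<le> m div 2 then (if X i then 1/2 - eps else 1/2 + eps)
      else (if X i then 1/2 + gam else 1/2 - gam))"

definition envy_ab :: "nat \<Rightarrow> real \<Rightarrow> real \<Rightarrow> (nat \<Rightarrow> bool) \<Rightarrow> nat set \<Rightarrow> nat set \<Rightarrow> real" where
  "envy_ab m eps gam X Aa Ab =
     (\<Sum>i\<in>Ab. mu_a m eps gam X i) - (\<Sum>i\<in>Aa. mu_a m eps gam X i)"

definition envy_ba :: "nat \<Rightarrow> real \<Rightarrow> real \<Rightarrow> (nat \<Rightarrow> bool) \<Rightarrow> nat set \<Rightarrow> nat set \<Rightarrow> real" where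
  "envy_ba m eps gam X Aa Ab =
     (\<Sum>i\<in>Aa. mu_b m eps gam X i) - (\<Sum>i\<in>Ab. mu_b m eps gam X i)"

definition envy :: "nat \<Rightarrow> real \<Rightarrow> real \<Rightarrow> (nat \<Rightarrow> bool) \<Rightarrow> nat set \<Rightarrow> nat set \<Rightarrow> real" where
  "envy m eps gam X Aa Ab = max (envy_ab m eps gam X Aa Ab) (envy_ba m eps gam X Aa Ab)"

definition Xhat :: "nat set \<Rightarrow> nat \<Rightarrow> bool" where
  "Xhat Aa i = (i \<in> Aa)"

definition Ahat_eps :: "nat \<Rightarrow> nat set \<Rightarrow> nat set" where
  "Ahat_eps m Aa = {i \<in> {1..m div 2}. Xhat Aa i}"

definition Bhat_eps :: "nat \<Rightarrow> nat set \<Rightarrow> nat set" where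
  "Bhat_eps m Aa = {i \<in> {1..m div 2}. \<not> Xhat Aa i}"

definition S_sign :: "nat set \<Rightarrow> nat \<Rightarrow> real" where
  "S_sign Aa i = (if i \<in> Aa then 1 else -1)"

definition V_gam :: "nat \<Rightarrow> real \<Rightarrow> real \<Rightarrow> (nat \<Rightarrow> bool) \<Rightarrow> nat set \<Rightarrow> real" where
  "V_gam m eps gam X Aa = (\<Sum>i\<in>{m div 2<..m}. S_sign Aa i * mu_a m eps gam X i)"

definition dH_half :: "nat \<Rightarrow> (nat \<Rightarrow> bool) \<Rightarrow> nat set \<Rightarrow> nat" where
  "dH_half m X Aa = card {i \<in> {1..m div 2}. X i \<noteq> Xhat Aa i}"

end

theory Submission
  imports Defs
begin

lemma sum_S_split:
  assumes "Aa \<union> Ab = U" "Aa \<inter> Ab = {}" "finite U"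
  shows "(\<Sum>i\<in>U. S_sign Aa i * f i) = (\<Sum>i\<in>Aa. f i) - (\<Sum>i\<in>Ab. f i)"
proof -
  have fa: "finite Aa" "finite Ab" using assms by auto
  have "(\<Sum>i\<in>U. S_sign Aa i * f i) = (\<Sum>i\<in>Aa. S_sign Aa i * f i) + (\<Sum>i\<in>Ab. S_sign Aa i * f i)"
    using assms fa by (metis sum.union_disjoint)
  also have "(\<Sum>i\<in>Aa. S_sign Aa i * f i) = (\<Sum>i\<in>Aa. f i)"
    by (rule sum.cong) (auto simp: S_sign_def)
  also have "(\<Sum>i\<in>Ab. S_sign Aa i * f i) = - (\<Sum>i\<in>Ab. f i)"
    using assms(2) by (auto simp: S_sign_def sum_negf[symmetric] intro!: sum.cong)
  finally show ?thesis by simp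
qed

lemma card_filter_real:
  assumes "finite A"
  shows "real (card {i\<in>A. P i}) = (\<Sum>i\<in>A. if P i then 1 else 0)"
  using assms by (simp add: sum.inter_filter[symmetric])

theorem lemma23:
  fixes m :: nat and X :: "nat \<Rightarrow> bool" and eps gam :: real and Aa Ab :: "nat set"
  assumes "4 dvd m"
    and "0 < eps" and "eps \<le> 1/2" and "0 < gam" and "gam \<le> 1/2"
    and "Aa \<union> Ab = {1..m}" and "Aa \<inter> Ab = {}"
    and "\<exists>K::real. K > 0
           \<and> real (dH_half m X Aa) > real m / 4 - K * gam * sqrt (real m) / (2 * eps)
           \<and> \<bar>(1/2) * (real (card (Ahat_eps m Aa)) - real (card (Bhat_eps m Aa)))
                + V_gam m eps gam X Aa\<bar> \<ge> K * gam * sqrt (real m)"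
  shows "envy m eps gam X Aa Ab > 0"
proof -
  obtain K :: real where K: "K > 0"
    "real (dH_half m X Aa) > real m / 4 - K * gam * sqrt (real m) / (2 * eps)"
    "\<bar>(1/2) * (real (card (Ahat_eps m Aa)) - real (card (Bhat_eps m Aa)))
                + V_gam m eps gam X Aa\<bar> \<ge> K * gam * sqrt (real m)"
    using assms(8) by blast
  define n where "n = m div 2"
  define I1 where "I1 = {1..n}"
  define I2 where "I2 = {n<..m}"
  have U: "{1..m} = I1 \<union> I2" "I1 \<inter> I2 = {}" "finite I1" "finite I2"
    unfolding I1_def I2_def n_def by auto
  define sg where "sg i = (if X i then (1::real) else -1)" for i
  define c where "c i = S_sign Aa i * sg i" for i
  define T where "T = (1/2) * (real (card (Ahat_eps m Aa)) - real (card (Bhat_eps m Aa)))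
                + V_gam m eps gam X Aa"
  define D where "D = (\<Sum>i\<in>I1. c i)"
  have sumS: "(\<Sum>i\<in>I1. S_sign Aa i) = real (card (Ahat_eps m Aa)) - real (card (Bhat_eps m Aa))"
  proof -
    have "(\<Sum>i\<in>I1. S_sign Aa i) = (\<Sum>i\<in>I1. (if i \<in> Aa then 1 else 0) - (if i \<notin> Aa then 1 else 0))"
      by (rule sum.cong) (auto simp: S_sign_def)
    also have "\<dots> = real (card {i\<in>I1. i \<in> Aa}) - real (card {i\<in>I1. i \<notin> Aa})"
      using U by (simp add: sum_subtractf card_filter_real)
    finally show ?thesis unfolding Ahat_eps_def Bhat_eps_def Xhat_def I1_def n_def .
  qed
  have Dval: "D = real n - 2 * real (dH_half m X Aa)"
  proof -
    have "D = (\<Sum>i\<in>I1. 1 - 2 * (if X i \<noteq> Xhat Aa i then 1 else 0))"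
      unfolding D_def by (rule sum.cong) (auto simp: c_def sg_def S_sign_def Xhat_def)
    also have "\<dots> = real (card I1) - 2 * real (card {i\<in>I1. X i \<noteq> Xhat Aa i})"
      using U by (simp add: sum_subtractf card_filter_real sum_distrib_left)
    finally show ?thesis unfolding dH_half_def I1_def n_def by simp
  qed
  have a1: "(\<Sum>i\<in>I1. S_sign Aa i * mu_a m eps gam X i) = (1/2) * (\<Sum>i\<in>I1. S_sign Aa i) + eps * D"
    unfolding D_def sum_distrib_left sum.distrib[symmetric]
    by (rule sum.cong) (auto simp: I1_def n_def mu_a_def c_def sg_def algebra_simps)
  have b1: "(\<Sum>i\<in>I1. S_sign Aa i * mu_b m eps gam X i) = (1/2) * (\<Sum>i\<in>I1. S_sign Aa i) - eps * D"
    unfolding D_def sum_distrib_left sum_subtractf[symmetric]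
    by (rule sum.cong) (auto simp: I1_def n_def mu_b_def c_def sg_def algebra_simps)
  have b2: "(\<Sum>i\<in>I2. S_sign Aa i * mu_b m eps gam X i) = V_gam m eps gam X Aa"
    unfolding V_gam_def I2_def n_def
    by (rule sum.cong) (auto simp: mu_a_def mu_b_def)
  have a2: "(\<Sum>i\<in>I2. S_sign Aa i * mu_a m eps gam X i) = V_gam m eps gam X Aa"
    unfolding V_gam_def I2_def n_def by simp
  have eab: "envy_ab m eps gam X Aa Ab = - T - eps * D"
  proof -
    have "envy_ab m eps gam X Aa Ab = - (\<Sum>i\<in>{1..m}. S_sign Aa i * mu_a m eps gam X i)"
      unfolding envy_ab_def using sum_S_split[OF assms(6,7)] by simp
    also have "\<dots> = - ((\<Sum>i\<in>I1. S_sign Aa i * mu_a m eps gam X i) + (\<Sum>i\<in>I2. S_sign Aa i * mu_a m eps gam X i))"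
      using U by (simp add: sum.union_disjoint)
    finally show ?thesis using a1 a2 sumS unfolding T_def by simp
  qed
  have eba: "envy_ba m eps gam X Aa Ab = T - eps * D"
  proof -
    have "envy_ba m eps gam X Aa Ab = (\<Sum>i\<in>{1..m}. S_sign Aa i * mu_b m eps gam X i)"
      unfolding envy_ba_def using sum_S_split[OF assms(6,7)] by simp
    also have "\<dots> = ((\<Sum>i\<in>I1. S_sign Aa i * mu_b m eps gam X i) + (\<Sum>i\<in>I2. S_sign Aa i * mu_b m eps gam X i))"
      using U by (simp add: sum.union_disjoint)
    finally show ?thesis using b1 b2 sumS unfolding T_def by simp
  qed
  have nle: "real n \<le> real m / 2" unfolding n_def by linarith
  have "real m / 2 - 2 * real (dH_half m X Aa) < K * gam * sqrt (real m) / eps"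
    using K(2) by (simp add: field_simps)
  hence "D < K * gam * sqrt (real m) / eps" using Dval nle by linarith
  hence "eps * D < K * gam * sqrt (real m)" using assms(2) by (simp add: field_simps)
  hence "eps * D < \<bar>T\<bar>" using K(3) unfolding T_def by linarith
  thus ?thesis unfolding envy_def eab eba by (cases "T < 0") (auto simp: max_def)
qed

end
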